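(* Let $0<\alpha<1$ and let $\bar M^\alpha(t)=\bar M(D_\alpha(t))$ be the multivariate generalized space fractional counting process. Then for every $\bar n=(n_1,\dots,n_q)\in\mathbb{N}_0^q$ and $t\ge0$, $$\Pr\{\bar M^\alpha(t)=\bar n\}=\sum_{\substack{\Omega(k_i,n_i)\\ i=1,\dots,q}}\sum_{r=0}^\infty\frac{(-t\lambda^\alpha)^r}{r!}\,\frac{\Gamma(\alpha r+1)}{\Gamma\big(\alpha r-\sum_{i=1}^q\sum_{j=1}^{k_i}x_{ij}+1\big)}\prod_{i=1}^q\prod_{j=1}^{k_i}\frac{(-\lambda_{ij}/\lambda)^{x_{ij}}}{x_{ij}!}.$$
   Context: Fix $q\ge1$, integers $k_1,\dots,k_q\ge1$, $\lambda_{ij}>0$ ($1\le i\le q$, $1\le j\le k_i$), $\lambda=\sum_{i,j}\lambda_{ij}$. The MGCP $\bar M(t)=(M_1(t),\dots,M_q(t))$ is the $\mathbb{N}_0^q$-valued process with $\bar M(0)=\bar0$, independent stationary increments and transition probabilities $\Pr\{\bar M(t+h)=\bar n+\bar j\mid\bar M(t)=\bar n\}=\lambda_{ij}h+o(h)$ if $\bar j$ has $i$th entry $j\in\{1,\dots,k_i\}$ and other entries $0$, $1-\lambda h+o(h)$ if $\bar j=\bar0$, $o(h)$ otherwise (equivalently, independent components with joint pgf $\exp(-t\sum_{i,j}\lambda_{ij}(1-u_i^j))$). $\{D_\alpha(t)\}$ is an $\alpha$-stable subordinator ($\mathbb{E}e^{-sD_\alpha(t)}=e^{-ts^\alpha}$)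 independent of $\bar M$. $\Omega(k_i,n_i)=\{(x_{i1},\dots,x_{ik_i})\in\mathbb{N}_0^{k_i}:\sum_j jx_{ij}=n_i\}$; the outer sum runs over all families $(x_{ij})$ with $(x_{i1},\dots,x_{ik_i})\in\Omega(k_i,n_i)$ for each $i$. Convention: $1/\Gamma(z)=0$ for $z\in\{0,-1,-2,\dots\}$. *)

theory Defs
  imports "HOL-Analysis.Analysis" "HOL-Probability.Probability"
begin

text \<open>Index conventions: components i range over {1..q}; for component i the jump
sizes j range over {1..k i}.  Vectors in N_0^q are functions nat => nat vanishing
outside {1..q}; families (x_ij) are functions nat => nat => nat vanishing outside the
index range.\<close>

definition natvecs :: "nat \<Rightarrow> (nat \<Rightarrow> nat) set" where
  "natvecs q = {n. \<forall>i. i \<notin> {1..q} \<longrightarrow> n i = 0}"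

definition total_rate :: "nat \<Rightarrow> (nat \<Rightarrow> nat) \<Rightarrow> (nat \<Rightarrow> nat \<Rightarrow> real) \<Rightarrow> real" where
  "total_rate q k lam = (\<Sum>i=1..q. \<Sum>j=1..k i. lam i j)"

definition Omega_fam :: "nat \<Rightarrow> (nat \<Rightarrow> nat) \<Rightarrow> (nat \<Rightarrow> nat) \<Rightarrow> (nat \<Rightarrow> nat \<Rightarrow> nat) set" where
  "Omega_fam q k n = {x. (\<forall>i\<in>{1..q}. (\<Sum>j=1..k i. j * x i j) = n i) \<and>
       (\<forall>i j. \<not> (i \<in> {1..q} \<and> j \<in> {1..k i}) \<longrightarrow> x i j = 0)}"

text \<open>p is the family of one-dimensional marginal laws of the MGCP: p s n = Pr{M(s) = n},
characterized by the joint probability generating function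
exp(-s * sum_{i,j} lam_ij (1 - u_i^j)), |u_i| <= 1.\<close>
definition is_MGCP_marginals ::
  "nat \<Rightarrow> (nat \<Rightarrow> nat) \<Rightarrow> (nat \<Rightarrow> nat \<Rightarrow> real) \<Rightarrow> (real \<Rightarrow> (nat \<Rightarrow> nat) \<Rightarrow> real) \<Rightarrow> bool" where
  "is_MGCP_marginals q k lam p \<longleftrightarrow>
     (\<forall>s\<ge>0. (\<forall>n\<in>natvecs q. p s n \<ge> 0) \<and>
        (\<forall>u::nat \<Rightarrow> real. (\<forall>i\<in>{1..q}. \<bar>u i\<bar> \<le> 1) \<longrightarrow>
           ((\<lambda>n. p s n * (\<Prod>i=1..q. u i ^ n i)) has_sum
              exp (- s * (\<Sum>i=1..q. \<Sum>j=1..k i. lam i j * (1 - u i ^ j)))) (natvecs q)))"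

text \<open>mu is the law of D_alpha(t): a probability measure on [0,oo) with Laplace
transform E exp(-s D_alpha(t)) = exp(-t s^alpha).\<close>
definition is_stable_subordinator_law :: "real \<Rightarrow> real \<Rightarrow> real measure \<Rightarrow> bool" where
  "is_stable_subordinator_law \<alpha> t \<mu> \<longleftrightarrow>
     prob_space \<mu> \<and> sets \<mu> = sets borel \<and> (AE x in \<mu>. x \<ge> 0) \<and>
     (\<forall>s\<ge>0. (\<integral>x. exp (- s * x) \<partial>\<mu>) = exp (- t * s powr \<alpha>))"

end

theory Submission
  imports Defs
begin


lemma powser_zero_coeffs:
  fixes c :: "nat \<Rightarrow> real"
  assumes d: "\<delta> > 0" and S: "\<And>h. \<bar>h\<bar> < \<delta> \<Longrightarrow> (\<lambda>m. c m * h^m) sums 0"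
  shows "c m = 0"
proof (induction m rule: less_induct)
  case (less m)
  define g where "g h = (\<Sum>j. c (j+m) * h^j)" for h :: real
  have sh: "(\<lambda>j. c (j+m) * h^j) sums 0" if h: "\<bar>h\<bar> < \<delta>" "h \<noteq> 0" for h
  proof -
    have "(\<lambda>j. c (j+m) * h^(j+m)) sums (0 - (\<Sum>i<m. c i * h^i))"
      using sums_split_initial_segment[OF S[OF h(1)], of m] by simp
    also have "(\<Sum>i<m. c i * h^i) = 0" using less by simp
    finally have "(\<lambda>j. c (j+m) * h^(j+m) * (1/h^m)) sums (0 * (1/h^m))"
      by (intro sums_mult2) simp
    then show ?thesis using h by (simp add: power_add)
  qed
  have "summable (\<lambda>j. c (j+m) * (\<delta>/2)^j)"
    using sh[of "\<delta>/2"] d by (auto simp: sums_iff)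
  then have cont: "isCont g 0" unfolding g_def
    by (rule isCont_powser) (use d in auto)
  have "g 0 = c m" unfolding g_def
    using powser_zero[of "\<lambda>j. c (j+m)"] by simp
  moreover have "(g \<longlongrightarrow> 0) (at 0)"
  proof -
    have "\<forall>\<^sub>F h in at 0. g h = 0"
      unfolding eventually_at using d sh
      by (intro exI[of _ \<delta>]) (auto simp: g_def sums_iff dist_norm)
    then show ?thesis by (simp add: tendsto_eventually)
  qed
  moreover have "(g \<longlongrightarrow> g 0) (at 0)" using cont isCont_def by blast
  ultimately show ?case using tendsto_unique[of "at (0::real)"] by force
qed

lemma pow_le_exp:
  fixes x :: real assumes "x \<ge> 0" shows "x^m / fact m \<le> exp x"
proof -
  have "summable (\<lambda>n. x^n / fact n)" using exp_converges[of x] by (simp add: sums_iff divide_inverse mult.commute)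
  then have "(\<Sum>n\<in>{m}. x^n / fact n) \<le> (\<Sum>n. x^n / fact n)"
    by (rule sum_le_suminf) (use assms in auto)
  also have "\<dots> = exp x" using exp_converges[of x] by (simp add: sums_iff divide_inverse mult.commute)
  finally show ?thesis by simp
qed



lemma abs_gchoose_le:
  fixes a :: real and r :: nat
  assumes "0 \<le> a" "a \<le> real r"
  shows "\<bar>a gchoose m\<bar> \<le> pochhammer (real r) m / fact m"
proof -
  have "\<bar>pochhammer (-a) m\<bar> = (\<Prod>i<m. \<bar>-a + real i\<bar>)"
    by (simp add: pochhammer_prod atLeast0LessThan abs_prod)
  also have "\<dots> \<le> (\<Prod>i<m. real r + real i)"
    by (intro prod_mono) (use assms in auto)
  also have "\<dots> = pochhammer (real r) m"
    by (simp add: pochhammer_prod atLeast0LessThan)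
  finally show ?thesis
    by (simp add: gbinomial_pochhammer abs_mult divide_right_mono)
qed



lemma laplace_G_summable:
  fixes \<alpha> t l h :: real
  assumes "0 < \<alpha>" "\<alpha> < 1" "t \<ge> 0" "l > 0" "\<bar>h\<bar> < l"
  defines "F \<equiv> (\<lambda>r m. (-t)^r / fact r * ((\<alpha> * real r) gchoose m) * l powr (\<alpha> * real r - real m))"
  shows "(\<lambda>(r,m). h^m * F r m) summable_on UNIV"
proof -
  define G where "G = (\<lambda>(r,m). h^m * F r m)"
  define Gb where "Gb = (\<lambda>(r::nat,m::nat). t^r / fact r * (pochhammer (real r) m / fact m) * \<bar>h\<bar>^m * l powr (\<alpha> * real r - real m))"
  define c where "c = l powr (\<alpha>+1) / (l - \<bar>h\<bar>)"
  have lh: "l - \<bar>h\<bar> > 0" "l + h > 0" using assms by auto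
  have poch_nn: "pochhammer (real r) m \<ge> 0" for r m
    by (simp add: pochhammer_prod prod_nonneg)
  have Gb_nonneg: "Gb (r,m) \<ge> 0" for r m
    unfolding Gb_def using assms poch_nn by (auto intro!: mult_nonneg_nonneg divide_nonneg_nonneg)
  have G_le: "norm (G (r,m)) \<le> Gb (r,m)" for r m
  proof -
    have "\<bar>(\<alpha> * real r) gchoose m\<bar> \<le> pochhammer (real r) m / fact m"
      using assms by (intro abs_gchoose_le) (auto intro: mult_left_le_one_le)
    moreover have "norm (G (r,m)) = (t^r / fact r * \<bar>h\<bar>^m * l powr (\<alpha> * real r - real m)) * \<bar>(\<alpha> * real r) gchoose m\<bar>"
      using assms by (simp add: G_def F_def abs_mult power_abs)
    moreover have "Gb (r,m) = (t^r / fact r * \<bar>h\<bar>^m * l powr (\<alpha> * real r - real m)) * (pochhammer (real r) m / fact m)"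
      by (simp add: Gb_def)
    moreover have "t^r / fact r * \<bar>h\<bar>^m * l powr (\<alpha> * real r - real m) \<ge> 0" using assms by simp
    ultimately show ?thesis by (metis mult_left_mono)
  qed
  have row_b: "(\<lambda>m. Gb (r,m)) sums ((t*c)^r / fact r)" for r
  proof -
    have "(\<lambda>m. ((- real r) gchoose m) * (-\<bar>h\<bar>)^m * l powr (- real r - real m)) sums ((-\<bar>h\<bar> + l) powr (- real r))"
      by (rule gen_binomial_real') (use assms in auto)
    then have "(\<lambda>m. t^r / fact r * l powr (\<alpha> * real r + real r) * (((- real r) gchoose m) * (-\<bar>h\<bar>)^m * l powr (- real r - real m)))
       sums (t^r / fact r * l powr (\<alpha> * real r + real r) * ((-\<bar>h\<bar> + l) powr (- real r)))"
      by (rule sums_mult)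
    moreover have "t^r / fact r * l powr (\<alpha> * real r + real r) * (((- real r) gchoose m) * (-\<bar>h\<bar>)^m * l powr (- real r - real m)) = Gb (r,m)" for m
    proof -
      have "((- real r) gchoose m) * (-\<bar>h\<bar>)^m = pochhammer (real r) m / fact m * \<bar>h\<bar>^m"
        by (simp add: gbinomial_pochhammer power_minus' )
      moreover have "l powr (\<alpha> * real r + real r) * l powr (- real r - real m) = l powr (\<alpha> * real r - real m)"
        by (simp add: powr_add[symmetric])
      ultimately show ?thesis unfolding Gb_def by (simp add: algebra_simps)
    qed
    moreover have "t^r / fact r * l powr (\<alpha> * real r + real r) * ((-\<bar>h\<bar> + l) powr (- real r)) = (t*c)^r / fact r"
    proof -
      have "l powr (\<alpha> * real r + real r) = (l powr (\<alpha>+1)) ^ r"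
        using assms by (simp add: powr_realpow[symmetric] powr_powr algebra_simps)
      moreover have "(-\<bar>h\<bar> + l) powr (- real r) = 1 / (l - \<bar>h\<bar>)^r"
        using lh by (simp add: powr_minus powr_realpow divide_inverse)
      ultimately show ?thesis unfolding c_def by (simp add: power_mult_distrib power_divide)
    qed
    ultimately show ?thesis by simp
  qed
  have Gb_sum: "Gb summable_on UNIV"
  proof -
    have "Gb summable_on Sigma UNIV (\<lambda>_. UNIV)"
    proof (rule summable_on_SigmaI)
      show "((\<lambda>m. Gb (r, m)) has_sum (t*c)^r / fact r) UNIV" for r
        by (rule sums_nonneg_imp_has_sum[OF row_b]) (rule Gb_nonneg)
      show "(\<lambda>r. (t*c)^r / fact r) summable_on UNIV"
        using exp_converges[of "t*c"] sums_nonneg_imp_has_sum[of "\<lambda>r. (t*c)^r / fact r"] assms lh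
        unfolding c_def by (auto simp: divide_inverse mult.commute summable_on_def)
    qed (rule Gb_nonneg)
    then show ?thesis by simp
  qed
  have G_sum: "G summable_on UNIV"
  proof -
    have "(\<lambda>x. norm (G x)) summable_on UNIV"
      by (rule summable_on_comparison_test[OF Gb_sum]) (use G_le in \<open>auto simp del: real_norm_def\<close>)
    then show ?thesis using summable_on_iff_abs_summable_on_real by blast
  qed
  then show ?thesis by (simp add: G_def)
qed

lemma laplace_series:
  fixes \<alpha> t l h :: real
  assumes "0 < \<alpha>" "\<alpha> < 1" "t \<ge> 0" "l > 0" "\<bar>h\<bar> < l"
  defines "F \<equiv> (\<lambda>r m. (-t)^r / fact r * ((\<alpha> * real r) gchoose m) * l powr (\<alpha> * real r - real m))"
  shows "(\<lambda>m. h^m * (\<Sum>r. F r m)) sums exp (- t * (l + h) powr \<alpha>)"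
    and "summable (\<lambda>r. F r m)"
proof -
  define G where "G = (\<lambda>(r,m). h^m * F r m)"
  have lh: "l - \<bar>h\<bar> > 0" "l + h > 0" using assms by auto
  have G_sum: "G summable_on UNIV" unfolding G_def F_def
    by (rule laplace_G_summable) (use assms in auto)
  then have G_has: "(G has_sum infsum G UNIV) (UNIV \<times> UNIV)" by (simp add: has_sum_infsum)
  have row: "(\<lambda>m. G (r,m)) sums ((-t)^r / fact r * (l + h) powr (\<alpha> * real r))" for r
  proof -
    have "(\<lambda>m. ((\<alpha> * real r) gchoose m) * h^m * l powr (\<alpha> * real r - real m)) sums ((h + l) powr (\<alpha> * real r))"
      by (rule gen_binomial_real') (use assms in auto)
    from sums_mult[OF this, of "(-t)^r / fact r"] show ?thesis
      unfolding G_def F_def by (simp add: algebra_simps)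
  qed
  have rowsum: "(\<lambda>r. (-t)^r / fact r * (l + h) powr (\<alpha> * real r)) sums exp (- t * (l + h) powr \<alpha>)"
  proof -
    have "(l + h) powr (\<alpha> * real r) = ((l+h) powr \<alpha>)^r" for r
      using lh by (simp add: powr_realpow[symmetric] powr_powr)
    then show ?thesis using exp_converges[of "- t * (l + h) powr \<alpha>"]
      by (simp add: divide_inverse mult.commute mult.left_commute flip: power_mult_distrib)
  qed
  have row_has: "((\<lambda>m. G (r,m)) has_sum ((-t)^r / fact r * (l + h) powr (\<alpha> * real r))) UNIV" for r
  proof -
    have "(\<lambda>m. G (r,m)) summable_on UNIV"
      using summable_on_SigmaD1[where f="\<lambda>r m. G (r,m)" and A=UNIV and B="\<lambda>_. UNIV" and x=r] G_sum by simp
    then have "((\<lambda>m. G (r,m)) has_sum infsum (\<lambda>m. G (r,m)) UNIV) UNIV" by (simp add: has_sum_infsum)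
    with row[of r] show ?thesis using has_sum_imp_sums sums_unique2 by metis
  qed
  have "((\<lambda>r. (-t)^r / fact r * (l + h) powr (\<alpha> * real r)) has_sum infsum G UNIV) UNIV"
    using has_sum_Sigma'[OF G_has row_has] by simp
  then have Geq: "infsum G UNIV = exp (- t * (l + h) powr \<alpha>)"
    using rowsum has_sum_imp_sums sums_unique2 by metis
  have Gs: "((\<lambda>(m,r). G (r,m)) has_sum exp (- t * (l + h) powr \<alpha>)) (UNIV \<times> UNIV)"
    using G_has Geq has_sum_swap[where f=G and A=UNIV and B=UNIV] by simp
  have Fsum: "(\<lambda>r. F r m) summable_on UNIV" for m
  proof -
    have "(\<lambda>(r,m). (l/2)^m * F r m) summable_on UNIV" unfolding F_def
      by (rule laplace_G_summable) (use assms in auto)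
    then have "(\<lambda>(m,r). (l/2)^m * F r m) summable_on UNIV \<times> UNIV"
      using summable_on_swap[where f="\<lambda>(r,m). (l/2)^m * F r m" and A=UNIV and B=UNIV] by simp
    then have "(\<lambda>r. (l/2)^m * F r m) summable_on UNIV"
      using summable_on_SigmaD1[where f="\<lambda>m r. (l/2)^m * F r m" and A=UNIV and B="\<lambda>_. UNIV" and x=m] by simp
    moreover have "(l/2)^m \<noteq> 0" using assms by simp
    ultimately show ?thesis using summable_on_cmult_right' by blast
  qed
  have col_has: "((\<lambda>r. G (r,m)) has_sum (h^m * (\<Sum>r. F r m))) UNIV" for m
  proof -
    have "((\<lambda>r. F r m) has_sum (\<Sum>r. F r m)) UNIV"
      using Fsum[of m] has_sum_infsum has_sum_imp_sums sums_unique by metis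
    from has_sum_cmult_right[OF this, of "h^m"] show ?thesis unfolding G_def by simp
  qed
  have "((\<lambda>m. h^m * (\<Sum>r. F r m)) has_sum exp (- t * (l + h) powr \<alpha>)) UNIV"
    using has_sum_Sigma'[OF Gs] col_has by simp
  then show "(\<lambda>m. h^m * (\<Sum>r. F r m)) sums exp (- t * (l + h) powr \<alpha>)"
    by (rule has_sum_imp_sums)
  show "summable (\<lambda>r. F r m)"
    using Fsum[of m] has_sum_infsum has_sum_imp_sums sums_summable by metis
qed



lemma moment_formula:
  fixes \<alpha> t l :: real and \<mu> :: "real measure"
  assumes a: "0 < \<alpha>" "\<alpha> < 1" and t: "t \<ge> 0" and l: "l > 0"
    and D: "is_stable_subordinator_law \<alpha> t \<mu>"
  shows "integrable \<mu> (\<lambda>x. x^m * exp (- l * x))"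
    and "(\<lambda>r. (- t * l powr \<alpha>)^r / fact r * Gamma (\<alpha> * real r + 1) * rGamma (\<alpha> * real r - real m + 1))
           sums ((-l)^m * (\<integral>x. x^m * exp (- l * x) \<partial>\<mu>))"
proof -
  have ps: "prob_space \<mu>" and se: "sets \<mu> = sets borel" and ae: "AE x in \<mu>. x \<ge> 0"
    and lap: "\<And>s. s \<ge> 0 \<Longrightarrow> (\<integral>x. exp (- s * x) \<partial>\<mu>) = exp (- t * s powr \<alpha>)"
    using D unfolding is_stable_subordinator_law_def by auto
  interpret prob_space \<mu> by (rule ps)
  have bm: "borel_measurable \<mu> = borel_measurable borel"
    by (rule measurable_cong_sets[OF se refl])
  have int_mon: "integrable \<mu> (\<lambda>x. x^k * exp (- l * x))" for k
  proof (rule integrable_const_bound[where B="fact k / l^k"])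
    show "AE x in \<mu>. norm (x^k * exp (- l * x)) \<le> fact k / l^k"
      using ae
    proof eventually_elim
      case (elim x)
      have "(l*x)^k / fact k \<le> exp (l*x)" using pow_le_exp[of "l*x" k] elim l by simp
      then have "x^k * l^k \<le> fact k * exp (l*x)"
        by (simp add: field_simps power_mult_distrib)
      then have "x^k * exp (- l * x) * l^k \<le> fact k * exp (l*x) * exp (- l * x)"
        by (simp add: mult.commute mult.left_commute mult_left_mono)
      also have "\<dots> = fact k" by (simp add: exp_minus field_simps)
      finally show ?case using elim l by (simp add: field_simps)
    qed
    show "(\<lambda>x. x^k * exp (- l * x)) \<in> borel_measurable \<mu>" unfolding bm by measurable
  qed
  then show "integrable \<mu> (\<lambda>x. x^m * exp (- l * x))" .
  define am where "am k = (\<integral>x. x^k * exp (- l * x) \<partial>\<mu>)" for k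
  have ser: "(\<lambda>k. (-h)^k / fact k * am k) sums exp (- t * (l + h) powr \<alpha>)" if h: "\<bar>h\<bar> < l" for h
  proof -
    define s where "s N x = (\<Sum>k<N. (-h)^k / fact k * (x^k * exp (- l * x)))" for N x
    have "(\<lambda>N. integral\<^sup>L \<mu> (s N)) \<longlonglongrightarrow> integral\<^sup>L \<mu> (\<lambda>x. exp (- (l + h) * x))"
    proof (rule integral_dominated_convergence[where w="\<lambda>_. 1"])
      show "(\<lambda>x. exp (- (l + h) * x)) \<in> borel_measurable \<mu>" unfolding bm by measurable
      show "s N \<in> borel_measurable \<mu>" for N unfolding bm s_def by measurable
      show "integrable \<mu> (\<lambda>_. 1::real)" by simp
      show "AE x in \<mu>. (\<lambda>N. s N x) \<longlonglongrightarrow> exp (- (l + h) * x)"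
      proof (rule AE_I2)
        fix x
        have "(\<lambda>n. (-h*x)^n /\<^sub>R fact n * exp (- l * x)) sums (exp (-h*x) * exp (- l * x))"
          by (rule sums_mult2[OF exp_converges])
        moreover have "(-h*x)^n /\<^sub>R fact n * exp (- l * x) = (-h)^n / fact n * (x^n * exp (- l * x))" for n
          by (simp add: power_mult_distrib[symmetric] divide_inverse)
        moreover have "exp (-h*x) * exp (- l * x) = exp (- (l + h) * x)"
          by (simp add: exp_add[symmetric] algebra_simps)
        ultimately show "(\<lambda>N. s N x) \<longlonglongrightarrow> exp (- (l + h) * x)"
          by (simp add: s_def sums_def)
      qed
      show "AE x in \<mu>. norm (s N x) \<le> 1" for N
        using ae
      proof eventually_elim
        case (elim x)
        have "norm (s N x) \<le> (\<Sum>k<N. (\<bar>h\<bar>*x)^k / fact k) * exp (- l * x)"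
          unfolding s_def sum_distrib_right
          by (rule order_trans[OF norm_sum]) (use elim in \<open>auto simp: abs_mult power_abs power_mult_distrib mult.assoc\<close>)
        also have "(\<Sum>k<N. (\<bar>h\<bar>*x)^k / fact k) \<le> exp (\<bar>h\<bar>*x)"
        proof -
          have "summable (\<lambda>n. (\<bar>h\<bar>*x)^n / fact n)"
            using exp_converges[of "\<bar>h\<bar>*x"] by (simp add: sums_iff divide_inverse mult.commute)
          then have "(\<Sum>k<N. (\<bar>h\<bar>*x)^k / fact k) \<le> (\<Sum>n. (\<bar>h\<bar>*x)^n / fact n)"
            by (rule sum_le_suminf) (use elim in auto)
          also have "\<dots> = exp (\<bar>h\<bar>*x)"
            using exp_converges[of "\<bar>h\<bar>*x"] by (simp add: sums_iff divide_inverse mult.commute)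
          finally show ?thesis .
        qed
        then have "(\<Sum>k<N. (\<bar>h\<bar>*x)^k / fact k) * exp (- l * x) \<le> exp (\<bar>h\<bar>*x) * exp (- l * x)"
          by (rule mult_right_mono) simp
        also have "\<dots> = exp ((\<bar>h\<bar> - l) * x)" by (simp add: exp_add[symmetric] algebra_simps)
        also have "\<dots> \<le> 1" using elim h by (simp add: mult_nonpos_nonneg)
        finally show ?case .
      qed
    qed
    moreover have "integral\<^sup>L \<mu> (s N) = (\<Sum>k<N. (-h)^k / fact k * am k)" for N
      unfolding s_def am_def using int_mon by simp
    moreover have "integral\<^sup>L \<mu> (\<lambda>x. exp (- (l + h) * x)) = exp (- t * (l + h) powr \<alpha>)"
      using lap[of "l+h"] h by simp
    ultimately show ?thesis by (simp add: sums_def)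
  qed
  define F where "F r k = (-t)^r / fact r * ((\<alpha> * real r) gchoose k) * l powr (\<alpha> * real r - real k)" for r k
  define b where "b k = (\<Sum>r. F r k)" for k
  have coef: "(-1)^k / fact k * am k - b k = 0" for k
  proof (rule powser_zero_coeffs[where \<delta>=l])
    show "l > 0" by (rule l)
    fix h :: real assume h: "\<bar>h\<bar> < l"
    have s1: "(\<lambda>k. (-h)^k / fact k * am k) sums exp (- t * (l + h) powr \<alpha>)" by (rule ser[OF h])
    have s2: "(\<lambda>k. h^k * b k) sums exp (- t * (l + h) powr \<alpha>)"
      unfolding b_def F_def by (rule laplace_series(1)) (use a t l h in auto)
    have "(\<lambda>k. (-h)^k / fact k * am k - h^k * b k) sums 0"
      using sums_diff[OF s1 s2] by simp
    moreover have "(-h)^k / fact k * am k - h^k * b k = ((-1)^k / fact k * am k - b k) * h^k" for k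
      by (simp add: power_minus' algebra_simps)
    ultimately show "(\<lambda>k. ((-1)^k / fact k * am k - b k) * h^k) sums 0" by simp
  qed
  have Fs: "(\<lambda>r. F r m) sums b m"
    unfolding b_def F_def using laplace_series(2)[OF a t l, of 0 m] l by (simp add: summable_sums)
  have trm: "(- t * l powr \<alpha>)^r / fact r * Gamma (\<alpha> * real r + 1) * rGamma (\<alpha> * real r - real m + 1)
      = (l^m * fact m) * F r m" for r
  proof -
    have nz: "\<alpha> * real r + 1 \<notin> \<int>\<^sub>\<le>\<^sub>0"
    proof
      assume "\<alpha> * real r + 1 \<in> \<int>\<^sub>\<le>\<^sub>0"
      then have "\<alpha> * real r + 1 \<le> 0" by (rule nonpos_Ints_nonpos)
      moreover have "\<alpha> * real r \<ge> 0" using a by simp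
      ultimately show False by simp
    qed
    have g: "fact m * ((\<alpha> * real r) gchoose m) = Gamma (\<alpha> * real r + 1) * rGamma (\<alpha> * real r - real m + 1)"
      by (simp add: gbinomial_Gamma[OF nz] rGamma_inverse_Gamma divide_inverse)
    have p: "l^m * l powr (\<alpha> * real r - real m) = (l powr \<alpha>)^r"
      using l by (simp add: powr_diff powr_realpow[symmetric] powr_powr mult.commute)
    have "(l^m * fact m) * F r m = (fact m * ((\<alpha> * real r) gchoose m)) * (l^m * l powr (\<alpha> * real r - real m)) * (-t)^r / fact r"
      unfolding F_def by (simp add: algebra_simps)
    also have "\<dots> = (Gamma (\<alpha> * real r + 1) * rGamma (\<alpha> * real r - real m + 1)) * (l powr \<alpha>)^r * (-t)^r / fact r"
      by (simp only: g p)
    also have "\<dots> = (- t * l powr \<alpha>)^r / fact r * Gamma (\<alpha> * real r + 1) * rGamma (\<alpha> * real r - real m + 1)"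
      by (simp add: algebra_simps flip: power_mult_distrib)
    finally show ?thesis by simp
  qed
  have "(\<lambda>r. (l^m * fact m) * F r m) sums ((l^m * fact m) * b m)"
    by (rule sums_mult[OF Fs])
  moreover have "(l^m * fact m) * b m = (-l)^m * am m"
  proof -
    have "b m = (-1)^m / fact m * am m" using coef[of m] by simp
    then show ?thesis by (simp add: power_minus')
  qed
  ultimately show "(\<lambda>r. (- t * l powr \<alpha>)^r / fact r * Gamma (\<alpha> * real r + 1) * rGamma (\<alpha> * real r - real m + 1))
           sums ((-l)^m * (\<integral>x. x^m * exp (- l * x) \<partial>\<mu>))"
    unfolding am_def by (simp only: trm)
qed



lemma has_sum_prod2:
  fixes c :: "'a \<Rightarrow> real" and a :: "'b \<Rightarrow> real"
  assumes c: "(c has_sum C) P" "(\<lambda>p. \<bar>c p\<bar>) summable_on P"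
      and a: "(a has_sum AA) Y" "(\<lambda>y. \<bar>a y\<bar>) summable_on Y"
  shows "((\<lambda>(p,y). c p * a y) has_sum (C * AA)) (P \<times> Y)"
proof -
  have "(\<lambda>(p,y). \<bar>c p\<bar> * \<bar>a y\<bar>) summable_on Sigma P (\<lambda>_. Y)"
  proof (rule summable_on_SigmaI[where g="\<lambda>p. \<bar>c p\<bar> * infsum (\<lambda>y. \<bar>a y\<bar>) Y"])
    show "((\<lambda>y. (\<lambda>(p,y). \<bar>c p\<bar> * \<bar>a y\<bar>) (p, y)) has_sum \<bar>c p\<bar> * infsum (\<lambda>y. \<bar>a y\<bar>) Y) Y" for p
      using has_sum_cmult_right[OF has_sum_infsum[OF a(2)], of "\<bar>c p\<bar>"] by simp
    show "(\<lambda>p. \<bar>c p\<bar> * infsum (\<lambda>y. \<bar>a y\<bar>) Y) summable_on P"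
      by (rule summable_on_cmult_left[OF c(2)])
  qed (auto simp: case_prod_beta)
  then have "(\<lambda>z. norm ((\<lambda>(p,y). c p * a y) z)) summable_on Sigma P (\<lambda>_. Y)"
    by (rule summable_on_cong[THEN iffD1, rotated]) (auto simp: abs_mult)
  then have sm: "(\<lambda>(p,y). c p * a y) summable_on Sigma P (\<lambda>_. Y)"
    by (rule abs_summable_summable)
  show ?thesis
  proof (rule has_sum_SigmaI[OF _ _ sm])
    show "((\<lambda>y. (\<lambda>(p,y). c p * a y) (p, y)) has_sum c p * AA) Y" for p
      using has_sum_cmult_right[OF a(1), of "c p"] by simp
    show "((\<lambda>p. c p * AA) has_sum C * AA) P"
      by (rule has_sum_cmult_left[OF c(1)])
  qed
qed

lemma has_sum_prod_PiE_real:
  fixes f :: "'a \<Rightarrow> 'b \<Rightarrow> real"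
  assumes "finite A"
    and "\<And>z. z \<in> A \<Longrightarrow> (f z has_sum s z) (B z)"
    and "\<And>z. z \<in> A \<Longrightarrow> (\<lambda>y. \<bar>f z y\<bar>) summable_on (B z)"
  shows "((\<lambda>g. \<Prod>z\<in>A. f z (g z)) has_sum (\<Prod>z\<in>A. s z)) (PiE A B)"
  using assms
proof (induction A arbitrary: f s rule: finite_induct)
  case empty
  then show ?case by (simp add: has_sum_finiteI)
next
  case (insert x F)
  have IH: "((\<lambda>g. \<Prod>z\<in>F. f z (g z)) has_sum (\<Prod>z\<in>F. s z)) (PiE F B)"
    by (rule insert.IH) (use insert.prems in auto)
  have IHa: "((\<lambda>g. \<Prod>z\<in>F. \<bar>f z (g z)\<bar>) has_sum (\<Prod>z\<in>F. infsum (\<lambda>y. \<bar>f z y\<bar>) (B z))) (PiE F B)"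
    by (rule insert.IH[where f="\<lambda>z y. \<bar>f z y\<bar>"]) (use insert.prems in \<open>auto intro: has_sum_infsum\<close>)
  have two: "((\<lambda>(p,y). (\<Prod>z\<in>F. f z (p z)) * f x y) has_sum ((\<Prod>z\<in>F. s z) * s x)) (PiE F B \<times> B x)"
  proof (rule has_sum_prod2[OF IH _ insert.prems(1) insert.prems(2)])
    show "(\<lambda>p. \<bar>\<Prod>z\<in>F. f z (p z)\<bar>) summable_on PiE F B"
      using IHa by (simp add: abs_prod summable_on_def) blast
  qed auto
  have pi: "PiE (insert x F) B = (\<lambda>(g,y). g(x:=y)) ` (PiE F B \<times> B x)"
    unfolding PiE_insert_eq
    by (subst swap_product [symmetric]) (simp add: image_image case_prod_unfold)
  have inj: "inj_on (\<lambda>(g, y). g(x := y)) (PiE F B \<times> B x)"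
    using \<open>x \<notin> F\<close> by (rule inj_combinator')
  have eq: "((\<lambda>g. \<Prod>z\<in>insert x F. f z (g z)) \<circ> (\<lambda>(g,y). g(x:=y))) = (\<lambda>(p,y). (\<Prod>z\<in>F. f z (p z)) * f x y)"
  proof -
    have "(\<Prod>z\<in>F. f z ((g(x := y)) z)) = (\<Prod>z\<in>F. f z (g z))" for g y
      using insert.hyps by (intro prod.cong) auto
    then show ?thesis using insert.hyps by (auto simp: fun_eq_iff mult.commute)
  qed
  show ?case
    unfolding pi has_sum_reindex[OF inj] eq using two insert.hyps by (simp add: mult.commute)
qed



definition famS :: "nat \<Rightarrow> (nat \<Rightarrow> nat) \<Rightarrow> (nat \<times> nat) set" where
  "famS q k = Sigma {1..q} (\<lambda>i. {1..k i})"
definition fams :: "nat \<Rightarrow> (nat \<Rightarrow> nat) \<Rightarrow> (nat \<Rightarrow> nat \<Rightarrow> nat) set" where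
  "fams q k = {x. \<forall>i j. (i,j) \<notin> famS q k \<longrightarrow> x i j = 0}"
definition nvec :: "nat \<Rightarrow> (nat \<Rightarrow> nat) \<Rightarrow> (nat \<Rightarrow> nat \<Rightarrow> nat) \<Rightarrow> nat \<Rightarrow> nat" where
  "nvec q k x = (\<lambda>i. if i \<in> {1..q} then (\<Sum>j=1..k i. j * x i j) else 0)"
definition Pf :: "nat \<Rightarrow> (nat \<Rightarrow> nat) \<Rightarrow> (nat \<Rightarrow> nat \<Rightarrow> real) \<Rightarrow> real \<Rightarrow> (nat \<Rightarrow> nat \<Rightarrow> nat) \<Rightarrow> real" where
  "Pf q k lam s x = (\<Prod>i=1..q. \<Prod>j=1..k i. exp (- s * lam i j) * (s * lam i j)^(x i j) / fact (x i j))"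
definition Pexp :: "nat \<Rightarrow> (nat \<Rightarrow> nat) \<Rightarrow> (nat \<Rightarrow> nat \<Rightarrow> real) \<Rightarrow> real \<Rightarrow> (nat \<Rightarrow> nat) \<Rightarrow> real" where
  "Pexp q k lam s n = (\<Sum>x\<in>Omega_fam q k n. Pf q k lam s x)"

lemma finite_famS[simp]: "finite (famS q k)"
  unfolding famS_def by auto

lemma Omega_fam_eq:
  assumes "n \<in> natvecs q"
  shows "Omega_fam q k n = {x\<in>fams q k. nvec q k x = n}"
  using assms unfolding Omega_fam_def fams_def nvec_def natvecs_def famS_def
  by (auto simp: fun_eq_iff)

lemma fams_nvec: "x \<in> fams q k \<Longrightarrow> nvec q k x \<in> natvecs q"
  unfolding natvecs_def nvec_def by auto

lemma finite_Omega_fam: "finite (Omega_fam q k n)"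
proof -
  define j where "j g = (\<lambda>i jj. if (i,jj) \<in> famS q k then g (i,jj) else 0)" for g :: "nat \<times> nat \<Rightarrow> nat"
  have "Omega_fam q k n \<subseteq> j ` PiE (famS q k) (\<lambda>z. {0..n (fst z)})"
  proof
    fix x assume x: "x \<in> Omega_fam q k n"
    have "x = j (restrict (\<lambda>z. x (fst z) (snd z)) (famS q k))"
      using x unfolding j_def Omega_fam_def famS_def by (auto simp: fun_eq_iff)
    moreover have "restrict (\<lambda>z. x (fst z) (snd z)) (famS q k) \<in> PiE (famS q k) (\<lambda>z. {0..n (fst z)})"
    proof -
      have "x i jj \<le> n i" if "i \<in> {1..q}" "jj \<in> {1..k i}" for i jj
      proof -
        have "x i jj \<le> jj * x i jj" using that by simp
        also have "\<dots> \<le> (\<Sum>j'=1..k i. j' * x i j')"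
          by (rule member_le_sum) (use that in auto)
        also have "\<dots> = n i" using x that unfolding Omega_fam_def by auto
        finally show ?thesis .
      qed
      then show ?thesis unfolding famS_def by auto
    qed
    ultimately show "x \<in> j ` PiE (famS q k) (\<lambda>z. {0..n (fst z)})" by blast
  qed
  moreover have "finite (PiE (famS q k) (\<lambda>z. {0..n (fst z)}))"
    by (rule finite_PiE) auto
  ultimately show ?thesis by (meson finite_surj)
qed



lemma exp_term_has_sum:
  fixes X c :: real
  shows "((\<lambda>m. c * X^m / fact m) has_sum (c * exp X)) UNIV"
proof (rule norm_summable_imp_has_sum)
  have e: "(\<lambda>m. X^m / fact m) sums exp X"
    using exp_converges[of X] by (simp add: divide_inverse mult.commute)
  show "(\<lambda>m. c * X^m / fact m) sums (c * exp X)"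
    using sums_mult[OF e, of c] by (simp add: mult.assoc)
  have "(\<lambda>m. \<bar>X\<bar>^m / fact m) sums exp \<bar>X\<bar>"
    using exp_converges[of "\<bar>X\<bar>"] by (simp add: divide_inverse mult.commute)
  then have "summable (\<lambda>m. \<bar>c\<bar> * (\<bar>X\<bar>^m / fact m))"
    by (intro summable_mult) (simp add: sums_iff)
  then show "summable (\<lambda>m. norm (c * X^m / fact m))"
    by (simp add: abs_mult power_abs)
qed

lemma exp_term_abs_summable:
  fixes X c :: real
  shows "(\<lambda>m. \<bar>c * X^m / fact m\<bar>) summable_on UNIV"
proof -
  have "((\<lambda>m. \<bar>c\<bar> * \<bar>X\<bar>^m / fact m) has_sum (\<bar>c\<bar> * exp \<bar>X\<bar>)) UNIV"
    by (rule exp_term_has_sum)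
  then show ?thesis
    by (simp add: summable_on_def abs_mult power_abs) blast
qed

lemma Pexp_gf:
  fixes q :: nat and k :: "nat \<Rightarrow> nat" and lam :: "nat \<Rightarrow> nat \<Rightarrow> real" and s :: real
    and u :: "nat \<Rightarrow> real"
  shows "((\<lambda>n. Pexp q k lam s n * (\<Prod>i=1..q. u i ^ n i)) has_sum
            exp (- s * (\<Sum>i=1..q. \<Sum>j=1..k i. lam i j * (1 - u i ^ j)))) (natvecs q)"
proof -
  define G where "G z m = exp (- s * lam (fst z) (snd z)) * (s * lam (fst z) (snd z) * u (fst z) ^ (snd z))^m / fact m"
    for z :: "nat \<times> nat" and m :: nat
  define H where "H x = (\<Prod>z\<in>famS q k. G z (x (fst z) (snd z)))" for x :: "nat \<Rightarrow> nat \<Rightarrow> nat"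
  define E where "E = exp (- s * (\<Sum>i=1..q. \<Sum>j=1..k i. lam i j * (1 - u i ^ j)))"
  have pi: "((\<lambda>g. \<Prod>z\<in>famS q k. G z (g z)) has_sum
      (\<Prod>z\<in>famS q k. exp (- s * lam (fst z) (snd z)) * exp (s * lam (fst z) (snd z) * u (fst z) ^ (snd z))))
      (PiE (famS q k) (\<lambda>_. UNIV))"
  proof (rule has_sum_prod_PiE_real)
    show "(G z has_sum (exp (- s * lam (fst z) (snd z)) * exp (s * lam (fst z) (snd z) * u (fst z) ^ (snd z)))) UNIV" for z
      unfolding G_def by (rule exp_term_has_sum)
    show "(\<lambda>y. \<bar>G z y\<bar>) summable_on UNIV" for z
      unfolding G_def by (rule exp_term_abs_summable)
  qed simp
  have Eval: "(\<Prod>z\<in>famS q k. exp (- s * lam (fst z) (snd z)) * exp (s * lam (fst z) (snd z) * u (fst z) ^ (snd z))) = E"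
  proof -
    have "(\<Prod>z\<in>famS q k. exp (- s * lam (fst z) (snd z)) * exp (s * lam (fst z) (snd z) * u (fst z) ^ (snd z)))
        = exp (\<Sum>z\<in>famS q k. - s * (lam (fst z) (snd z) * (1 - u (fst z) ^ (snd z))))"
      by (simp add: exp_sum exp_add[symmetric] algebra_simps)
    also have "(\<Sum>z\<in>famS q k. - s * (lam (fst z) (snd z) * (1 - u (fst z) ^ (snd z))))
        = - s * (\<Sum>i=1..q. \<Sum>j=1..k i. lam i j * (1 - u i ^ j))"
      unfolding famS_def by (simp add: sum_distrib_left sum.Sigma split_def)
    finally show ?thesis unfolding E_def .
  qed
  have famsH: "(H has_sum E) (fams q k)"
  proof -
    have "((\<lambda>g. \<Prod>z\<in>famS q k. G z (g z)) has_sum E) (PiE (famS q k) (\<lambda>_. UNIV)) =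
          (H has_sum E) (fams q k)"
    proof (rule has_sum_reindex_bij_witness[where i="\<lambda>x. restrict (\<lambda>z. x (fst z) (snd z)) (famS q k)"
          and j="\<lambda>g i jj. if (i,jj) \<in> famS q k then g (i,jj) else 0"], goal_cases)
      case (1 a) then show ?case by (auto simp: fun_eq_iff PiE_def extensional_def)
    next
      case (2 a) then show ?case by (auto simp: fams_def)
    next
      case (3 b) then show ?case by (auto simp: fun_eq_iff fams_def)
    next
      case (4 b) then show ?case by auto
    next
      case (5 a) then show ?case unfolding H_def by (intro prod.cong) auto
    next
      case 6 then show ?case by simp
    qed
    with pi Eval show ?thesis by simp
  qed
  have Hval: "H x = Pf q k lam s x * (\<Prod>i=1..q. u i ^ nvec q k x i)" for x
  proof -
    have "H x = (\<Prod>i=1..q. \<Prod>j=1..k i. G (i,j) (x i j))"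
      unfolding H_def famS_def by (simp add: prod.Sigma split_def)
    also have "\<dots> = (\<Prod>i=1..q. \<Prod>j=1..k i. (exp (- s * lam i j) * (s * lam i j)^(x i j) / fact (x i j)) * u i ^ (j * x i j))"
      unfolding G_def by (intro prod.cong refl) (simp add: power_mult_distrib power_mult)
    also have "\<dots> = Pf q k lam s x * (\<Prod>i=1..q. \<Prod>j=1..k i. u i ^ (j * x i j))"
      unfolding Pf_def by (simp only: prod.distrib)
    also have "(\<Prod>i=1..q. \<Prod>j=1..k i. u i ^ (j * x i j)) = (\<Prod>i=1..q. u i ^ nvec q k x i)"
      unfolding nvec_def by (intro prod.cong refl) (simp add: power_sum)
    finally show ?thesis .
  qed
  have sig: "((\<lambda>(n,x). H x) has_sum E) (Sigma (natvecs q) (Omega_fam q k))"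
  proof -
    have "(H has_sum E) (fams q k) = ((\<lambda>(n,x). H x) has_sum E) (Sigma (natvecs q) (Omega_fam q k))"
    proof (rule has_sum_reindex_bij_witness[where i=snd and j="\<lambda>x. (nvec q k x, x)"], goal_cases)
      case (1 a) then show ?case by simp
    next
      case (2 a) then show ?case using fams_nvec[of a q k] Omega_fam_eq[OF fams_nvec[of a q k]] by auto
    next
      case (3 b) then show ?case using Omega_fam_eq by auto
    next
      case (4 b) then show ?case using Omega_fam_eq by auto
    next
      case (5 a) then show ?case by simp
    next
      case 6 then show ?case by simp
    qed
    with famsH show ?thesis by simp
  qed
  have inner: "((\<lambda>x. (\<lambda>(n,x). H x) (n, x)) has_sum (Pexp q k lam s n * (\<Prod>i=1..q. u i ^ n i))) (Omega_fam q k n)"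
    if n: "n \<in> natvecs q" for n
  proof -
    have "(\<Sum>x\<in>Omega_fam q k n. H x) = Pexp q k lam s n * (\<Prod>i=1..q. u i ^ n i)"
      unfolding Pexp_def sum_distrib_right
      by (intro sum.cong refl) (use Omega_fam_eq[OF n] in \<open>auto simp: Hval\<close>)
    then show ?thesis using finite_Omega_fam by (auto intro: has_sum_finiteI)
  qed
  show ?thesis using has_sum_Sigma'[OF sig inner] unfolding E_def by simp
qed



lemma digits_bound:
  fixes a :: "nat \<Rightarrow> nat"
  assumes "\<forall>i<Q. a i < B"
  shows "(\<Sum>i<Q. a i * B^i) < B^Q"
  using assms
proof (induction Q)
  case 0 then show ?case by simp
next
  case (Suc Q)
  have "(\<Sum>i<Suc Q. a i * B^i) = (\<Sum>i<Q. a i * B^i) + a Q * B^Q" by simp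
  also have "\<dots> < B^Q + a Q * B^Q" using Suc by simp
  also have "\<dots> = (a Q + 1) * B^Q" by simp
  also have "\<dots> \<le> B * B^Q" using Suc.prems by (intro mult_right_mono) auto
  finally show ?case by simp
qed

lemma digits_inj:
  fixes a b :: "nat \<Rightarrow> nat"
  assumes "\<forall>i<Q. a i < B" "\<forall>i<Q. b i < B" "(\<Sum>i<Q. a i * B^i) = (\<Sum>i<Q. b i * B^i)"
  shows "\<forall>i<Q. a i = b i"
  using assms
proof (induction Q)
  case 0 then show ?case by simp
next
  case (Suc Q)
  have ba: "(\<Sum>i<Q. a i * B^i) < B^Q" and bb: "(\<Sum>i<Q. b i * B^i) < B^Q"
    using Suc.prems by (auto intro!: digits_bound)
  have eq: "(\<Sum>i<Q. a i * B^i) + a Q * B^Q = (\<Sum>i<Q. b i * B^i) + b Q * B^Q"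
    using Suc.prems(3) by simp
  have pos: "B^Q \<noteq> 0" using Suc.prems by auto
  have "((\<Sum>i<Q. a i * B^i) + a Q * B^Q) div B^Q = a Q"
    using ba pos by simp
  moreover have "((\<Sum>i<Q. b i * B^i) + b Q * B^Q) div B^Q = b Q"
    using bb pos by simp
  ultimately have top: "a Q = b Q" using eq by simp
  with eq have "(\<Sum>i<Q. a i * B^i) = (\<Sum>i<Q. b i * B^i)" by simp
  moreover have "\<forall>i<Q. a i < B" "\<forall>i<Q. b i < B" using Suc.prems(1,2) by auto
  ultimately have "\<forall>i<Q. a i = b i" using Suc.IH by blast
  with top show ?case using less_Suc_eq by auto
qed

lemma prod_subst_eq:
  fixes \<epsilon> y :: real and B q :: nat and n :: "nat \<Rightarrow> nat"
  shows "(\<Prod>i=1..q. (\<epsilon> * y^(B^i)) ^ n i) = \<epsilon>^(\<Sum>i=1..q. n i) * y^(\<Sum>i=1..q. n i * B^i)"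
  by (simp add: power_mult_distrib prod.distrib power_sum power_mult[symmetric] mult.commute)

lemma finite_deg_fibre: "finite {n \<in> natvecs q. (\<Sum>i=1..q. n i) = m}"
proof -
  define j where "j g = (\<lambda>i. if i \<in> {1..q} then g i else 0)" for g :: "nat \<Rightarrow> nat"
  have "{n \<in> natvecs q. (\<Sum>i=1..q. n i) = m} \<subseteq> j ` PiE {1..q} (\<lambda>_. {0..m})"
  proof
    fix n assume n: "n \<in> {n \<in> natvecs q. (\<Sum>i=1..q. n i) = m}"
    have "n = j (restrict n {1..q})" using n unfolding j_def natvecs_def by (auto simp: fun_eq_iff)
    moreover have "n i \<le> m" if "i \<in> {1..q}" for i
      using n member_le_sum[of i "{1..q}" n] that by auto
    then have "restrict n {1..q} \<in> PiE {1..q} (\<lambda>_. {0..m})" by auto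
    ultimately show "n \<in> j ` PiE {1..q} (\<lambda>_. {0..m})" by blast
  qed
  moreover have "finite (PiE {1..q} (\<lambda>_. {0..m::nat}))" by (rule finite_PiE) auto
  ultimately show ?thesis by (meson finite_surj)
qed

lemma mv_unique:
  fixes d :: "(nat \<Rightarrow> nat) \<Rightarrow> real" and q :: nat
  assumes gf: "\<And>u. (\<forall>i\<in>{1..q}. \<bar>u i\<bar> \<le> 1) \<Longrightarrow> ((\<lambda>n. d n * (\<Prod>i=1..q. u i ^ n i)) has_sum 0) (natvecs q)"
    and n0: "n0 \<in> natvecs q"
  shows "d n0 = 0"
proof -
  define deg where "deg n = (\<Sum>i=1..q. n i)" for n :: "nat \<Rightarrow> nat"
  define m0 where "m0 = deg n0"
  define B where "B = Suc m0"
  define e where "e n = (\<Sum>i=1..q. n i * B^i)" for n :: "nat \<Rightarrow> nat"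
  define F where "F m = {n \<in> natvecs q. deg n = m}" for m
  define g where "g m y = (\<Sum>n\<in>F m. d n * y^(e n))" for m and y :: real
  have finF: "finite (F m)" for m unfolding F_def deg_def by (rule finite_deg_fibre)
  have step1: "g m y = 0" if y: "\<bar>y\<bar> < 1" for m y
  proof (rule powser_zero_coeffs[where \<delta>=1 and c="\<lambda>m. g m y"])
    fix \<epsilon> :: real assume eps: "\<bar>\<epsilon>\<bar> < 1"
    define u where "u i = \<epsilon> * y^(B^i)" for i
    have "\<bar>u i\<bar> \<le> 1" for i
    proof -
      have "\<bar>y^(B^i)\<bar> \<le> 1" using y by (simp add: power_abs power_le_one)
      then have "\<bar>\<epsilon>\<bar> * \<bar>y^(B^i)\<bar> \<le> 1 * 1" using eps by (intro mult_mono) auto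
      then show ?thesis by (simp add: u_def abs_mult)
    qed
    then have h: "((\<lambda>n. d n * (\<epsilon>^(deg n) * y^(e n))) has_sum 0) (natvecs q)"
      using gf[of u] unfolding u_def deg_def e_def prod_subst_eq by simp
    have "((\<lambda>n. d n * (\<epsilon>^(deg n) * y^(e n))) has_sum 0) (natvecs q) =
          ((\<lambda>(m,n). d n * (\<epsilon>^(deg n) * y^(e n))) has_sum 0) (Sigma UNIV F)"
    proof (rule has_sum_reindex_bij_witness[where i=snd and j="\<lambda>n. (deg n, n)"], goal_cases)
      case (1 a) then show ?case by simp
    next
      case (2 a) then show ?case by (simp add: F_def)
    next
      case (3 b) then show ?case by (auto simp: F_def)
    next
      case (4 b) then show ?case by (auto simp: F_def)
    next
      case (5 a) then show ?case by simp
    next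
      case 6 then show ?case by simp
    qed
    with h have sig: "((\<lambda>(m,n). d n * (\<epsilon>^(deg n) * y^(e n))) has_sum 0) (Sigma UNIV F)" by simp
    have inner: "((\<lambda>n. (\<lambda>(m,n). d n * (\<epsilon>^(deg n) * y^(e n))) (m, n)) has_sum (g m y * \<epsilon>^m)) (F m)" for m
    proof -
      have "(\<Sum>n\<in>F m. d n * (\<epsilon>^(deg n) * y^(e n))) = g m y * \<epsilon>^m"
        unfolding g_def sum_distrib_right by (intro sum.cong refl) (auto simp: F_def)
      then show ?thesis using finF[of m] by (auto intro: has_sum_finiteI)
    qed
    have "((\<lambda>m. g m y * \<epsilon>^m) has_sum 0) UNIV"
      using has_sum_Sigma'[OF sig inner] by simp
    then show "(\<lambda>m. g m y * \<epsilon>^m) sums 0" by (rule has_sum_imp_sums)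
  qed simp
  define c where "c N = (\<Sum>n\<in>{n \<in> F m0. e n = N}. d n)" for N
  have c0: "c N = 0" for N
  proof (rule powser_zero_coeffs[where \<delta>=1 and c=c])
    fix y :: real assume y: "\<bar>y\<bar> < 1"
    have "(\<lambda>N. c N * y^N) sums (\<Sum>N\<in>e ` F m0. c N * y^N)"
    proof (rule sums_finite)
      show "finite (e ` F m0)" using finF by simp
      show "c N * y^N = 0" if "N \<notin> e ` F m0" for N
      proof -
        have E: "{n \<in> F m0. e n = N} = {}" using that by auto
        show ?thesis by (simp add: c_def E)
      qed
    qed
    also have "(\<Sum>N\<in>e ` F m0. c N * y^N) = g m0 y"
    proof -
      have "(\<Sum>N\<in>e ` F m0. c N * y^N) = (\<Sum>N\<in>e ` F m0. \<Sum>n\<in>{n \<in> F m0. e n = N}. d n * y^(e n))"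
        unfolding c_def sum_distrib_right by (intro sum.cong refl) auto
      also have "\<dots> = g m0 y"
        unfolding g_def using finF by (rule sum.image_gen[symmetric])
      finally show ?thesis .
    qed
    also have "\<dots> = 0" by (rule step1[OF y])
    finally show "(\<lambda>N. c N * y^N) sums 0" .
  qed simp
  have n0F: "n0 \<in> F m0" using n0 by (simp add: F_def m0_def)
  have single: "{n \<in> F m0. e n = e n0} = {n0}"
  proof (intro equalityI subsetI)
    fix n assume n: "n \<in> {n \<in> F m0. e n = e n0}"
    have le: "a i < B" if "a \<in> F m0" for a i
    proof (cases "i \<in> {1..q}")
      case True
      then have "a i \<le> deg a" unfolding deg_def by (intro member_le_sum) auto
      then show ?thesis using that by (simp add: F_def B_def)
    next
      case False
      then show ?thesis using that by (simp add: F_def natvecs_def B_def)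
    qed
    have ee: "e a = (\<Sum>i<Suc q. a i * B^i)" if "a \<in> F m0" for a
    proof -
      have "a 0 = 0" using that by (simp add: F_def natvecs_def)
      moreover have "{..<Suc q} = insert 0 {1..q}" by auto
      ultimately show ?thesis unfolding e_def by simp
    qed
    have "\<forall>i<Suc q. n i = n0 i"
      by (rule digits_inj) (use n n0F le ee in auto)
    moreover have "n i = n0 i" if "i \<ge> Suc q" for i
      using n n0F that by (auto simp: F_def natvecs_def)
    ultimately have "n = n0" by (metis not_le ext)
    then show "n \<in> {n0}" by simp
  qed (use n0F in auto)
  have "c (e n0) = d n0" unfolding c_def single by simp
  then show ?thesis using c0 by simp
qed



lemma Pf_alt:
  fixes lam :: "nat \<Rightarrow> nat \<Rightarrow> real" and s :: real
  shows
  "Pf q k lam s x = exp (- s * total_rate q k lam) * s ^ (\<Sum>i=1..q. \<Sum>j=1..k i. x i j)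
     * (\<Prod>i=1..q. \<Prod>j=1..k i. lam i j ^ x i j / fact (x i j))"
proof -
  have "Pf q k lam s x = (\<Prod>i=1..q. \<Prod>j=1..k i. exp (- s * lam i j) * s ^ x i j * (lam i j ^ x i j / fact (x i j)))"
    unfolding Pf_def by (intro prod.cong refl) (simp add: power_mult_distrib)
  also have "\<dots> = (\<Prod>i=1..q. \<Prod>j=1..k i. exp (- s * lam i j)) * (\<Prod>i=1..q. \<Prod>j=1..k i. s ^ x i j)
      * (\<Prod>i=1..q. \<Prod>j=1..k i. lam i j ^ x i j / fact (x i j))"
    by (simp only: prod.distrib)
  also have "(\<Prod>i=1..q. \<Prod>j=1..k i. exp (- s * lam i j)) = exp (- s * total_rate q k lam)"
    unfolding total_rate_def by (simp add: exp_sum sum_distrib_left)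
  also have "(\<Prod>i=1..q. \<Prod>j=1..k i. s ^ x i j) = s ^ (\<Sum>i=1..q. \<Sum>j=1..k i. x i j)"
    by (simp add: power_sum)
  finally show ?thesis .
qed

lemma coef_alt:
  fixes lam :: "nat \<Rightarrow> nat \<Rightarrow> real" and L :: real
  assumes "L \<noteq> 0"
  shows "(\<Prod>i=1..q. \<Prod>j=1..k i. lam i j ^ x i j / fact (x i j)) / (-L) ^ (\<Sum>i=1..q. \<Sum>j=1..k i. x i j)
    = (\<Prod>i=1..q. \<Prod>j=1..k i. (- lam i j / L) ^ x i j / fact (x i j))"
proof -
  have "(\<Prod>i=1..q. \<Prod>j=1..k i. (- lam i j / L) ^ x i j / fact (x i j))
      = (\<Prod>i=1..q. \<Prod>j=1..k i. (-1/L) ^ x i j * (lam i j ^ x i j / fact (x i j)))"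
  proof (intro prod.cong refl)
    fix i j
    have e: "- lam i j / L = (-1/L) * lam i j" using assms by (simp add: field_simps)
    show "(- lam i j / L) ^ x i j / fact (x i j) = (-1/L) ^ x i j * (lam i j ^ x i j / fact (x i j))"
      by (simp only: e power_mult_distrib) simp
  qed
  also have "\<dots> = (\<Prod>i=1..q. \<Prod>j=1..k i. (-1/L) ^ x i j) * (\<Prod>i=1..q. \<Prod>j=1..k i. lam i j ^ x i j / fact (x i j))"
    by (simp only: prod.distrib)
  also have "(\<Prod>i=1..q. \<Prod>j=1..k i. (-1/L) ^ x i j) = (-1/L) ^ (\<Sum>i=1..q. \<Sum>j=1..k i. x i j)"
    by (simp add: power_sum)
  finally have eq: "(\<Prod>i=1..q. \<Prod>j=1..k i. (- lam i j / L) ^ x i j / fact (x i j)) =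
     (-1/L) ^ (\<Sum>i=1..q. \<Sum>j=1..k i. x i j) * (\<Prod>i=1..q. \<Prod>j=1..k i. lam i j ^ x i j / fact (x i j))" .
  have "(-1/L) = 1/(-L)" by simp
  then have "(-1/L) ^ (\<Sum>i=1..q. \<Sum>j=1..k i. x i j) = 1 / (-L) ^ (\<Sum>i=1..q. \<Sum>j=1..k i. x i j)"
    by (simp only: power_one_over)
  with eq show ?thesis by simp
qed

theorem mainTheorem3:
  fixes q :: nat and k :: "nat \<Rightarrow> nat" and lam :: "nat \<Rightarrow> nat \<Rightarrow> real"
    and \<alpha> t :: real and p :: "real \<Rightarrow> (nat \<Rightarrow> nat) \<Rightarrow> real" and \<mu> :: "real measure"
    and n :: "nat \<Rightarrow> nat"
  assumes q: "q \<ge> 1"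
    and k: "\<forall>i\<in>{1..q}. k i \<ge> 1"
    and lam: "\<forall>i\<in>{1..q}. \<forall>j\<in>{1..k i}. lam i j > 0"
    and alpha: "0 < \<alpha>" "\<alpha> < 1"
    and t: "t \<ge> 0"
    and M: "is_MGCP_marginals q k lam p"
    and D: "is_stable_subordinator_law \<alpha> t \<mu>"
    and n: "n \<in> natvecs q"
  shows "(\<integral>s\<in>{0..}. p s n \<partial>\<mu>) =
    (\<Sum>x\<in>Omega_fam q k n.
       (\<Sum>r. (- t * total_rate q k lam powr \<alpha>) ^ r / fact r
              * Gamma (\<alpha> * real r + 1)
              * rGamma (\<alpha> * real r - real (\<Sum>i=1..q. \<Sum>j=1..k i. x i j) + 1)
              * (\<Prod>i=1..q. \<Prod>j=1..k i. (- lam i j / total_rate q k lam) ^ x i j / fact (x i j))))"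
proof -
  define L where "L = total_rate q k lam"
  have Lpos: "L > 0"
    unfolding L_def total_rate_def
  proof (rule sum_pos)
    show "{1..q} \<noteq> {}" using q by auto
    fix i assume i: "i \<in> {1..q}"
    show "0 < (\<Sum>j=1..k i. lam i j)"
      by (rule sum_pos) (use i k lam in auto)
  qed auto
  have ps: "prob_space \<mu>" and se: "sets \<mu> = sets borel" and ae: "AE x in \<mu>. x \<ge> 0"
    using D unfolding is_stable_subordinator_law_def by auto
  interpret prob_space \<mu> by (rule ps)
  have bm: "borel_measurable \<mu> = borel_measurable borel"
    by (rule measurable_cong_sets[OF se refl])
  have pid0: "p s n - Pexp q k lam s n = 0" if s: "s \<ge> 0" for s
  proof (rule mv_unique[where d="\<lambda>n. p s n - Pexp q k lam s n"])
    fix u :: "nat \<Rightarrow> real" assume u: "\<forall>i\<in>{1..q}. \<bar>u i\<bar> \<le> 1"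
    have h1: "((\<lambda>n. p s n * (\<Prod>i=1..q. u i ^ n i)) has_sum exp (- s * (\<Sum>i=1..q. \<Sum>j=1..k i. lam i j * (1 - u i ^ j)))) (natvecs q)"
      using M s u unfolding is_MGCP_marginals_def by blast
    have h2: "((\<lambda>n. Pexp q k lam s n * (\<Prod>i=1..q. u i ^ n i)) has_sum exp (- s * (\<Sum>i=1..q. \<Sum>j=1..k i. lam i j * (1 - u i ^ j)))) (natvecs q)"
      by (rule Pexp_gf)
    have "((\<lambda>n. p s n * (\<Prod>i=1..q. u i ^ n i) + - (Pexp q k lam s n * (\<Prod>i=1..q. u i ^ n i))) has_sum
        (exp (- s * (\<Sum>i=1..q. \<Sum>j=1..k i. lam i j * (1 - u i ^ j))) + - exp (- s * (\<Sum>i=1..q. \<Sum>j=1..k i. lam i j * (1 - u i ^ j))))) (natvecs q)"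
      by (intro has_sum_add h1 has_sum_uminus[THEN iffD2]) (simp only: minus_minus h2)
    then show "((\<lambda>n. (p s n - Pexp q k lam s n) * (\<Prod>i=1..q. u i ^ n i)) has_sum 0) (natvecs q)"
      by (simp add: algebra_simps)
  qed (rule n)
  have pid: "p s n = Pexp q k lam s n" if s: "s \<ge> 0" for s
    using pid0[OF s] by simp
  define mx where "mx x = (\<Sum>i=1..q. \<Sum>j=1..k i. x i j)" for x :: "nat \<Rightarrow> nat \<Rightarrow> nat"
  define C where "C x = (\<Prod>i=1..q. \<Prod>j=1..k i. lam i j ^ x i j / fact (x i j))" for x :: "nat \<Rightarrow> nat \<Rightarrow> nat"
  have int_m: "integrable \<mu> (\<lambda>s. s ^ m * exp (- L * s))" for m
    by (rule moment_formula(1)[OF alpha t Lpos D])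
  have "(\<integral>s\<in>{0..}. p s n \<partial>\<mu>) = (\<integral>s. indicator {0..} s *\<^sub>R p s n \<partial>\<mu>)"
    by (simp add: set_lebesgue_integral_def)
  also have "\<dots> = (\<integral>s. indicator {0..} s *\<^sub>R Pexp q k lam s n \<partial>\<mu>)"
    by (intro Bochner_Integration.integral_cong refl) (auto simp: indicator_def pid)
  also have "\<dots> = (\<integral>s. (\<Sum>x\<in>Omega_fam q k n. C x * (s ^ mx x * exp (- L * s))) \<partial>\<mu>)"
  proof (rule integral_cong_AE)
    show "(\<lambda>s. indicator {0..} s *\<^sub>R Pexp q k lam s n) \<in> borel_measurable \<mu>"
      unfolding bm Pexp_def Pf_def by measurable
    show "(\<lambda>s. \<Sum>x\<in>Omega_fam q k n. C x * (s ^ mx x * exp (- L * s))) \<in> borel_measurable \<mu>"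
      unfolding bm by measurable
    show "AE s in \<mu>. indicator {0..} s *\<^sub>R Pexp q k lam s n = (\<Sum>x\<in>Omega_fam q k n. C x * (s ^ mx x * exp (- L * s)))"
      using ae
    proof eventually_elim
      case (elim s)
      then show ?case
        unfolding Pexp_def by (auto simp: Pf_alt L_def C_def mx_def intro!: sum.cong)
    qed
  qed
  also have "\<dots> = (\<Sum>x\<in>Omega_fam q k n. C x * (\<integral>s. s ^ mx x * exp (- L * s) \<partial>\<mu>))"
    using int_m by simp
  also have "\<dots> = (\<Sum>x\<in>Omega_fam q k n.
       (\<Sum>r. (- t * L powr \<alpha>) ^ r / fact r * Gamma (\<alpha> * real r + 1)
              * rGamma (\<alpha> * real r - real (mx x) + 1)
              * (\<Prod>i=1..q. \<Prod>j=1..k i. (- lam i j / L) ^ x i j / fact (x i j))))"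
  proof (intro sum.cong refl)
    fix x
    define T where "T r = (- t * L powr \<alpha>) ^ r / fact r * Gamma (\<alpha> * real r + 1) * rGamma (\<alpha> * real r - real (mx x) + 1)" for r
    have Ts: "T sums ((-L) ^ mx x * (\<integral>s. s ^ mx x * exp (- L * s) \<partial>\<mu>))"
      unfolding T_def by (rule moment_formula(2)[OF alpha t Lpos D])
    have nz: "(-L) ^ mx x \<noteq> 0" using Lpos by simp
    have s1: "(\<lambda>r. T r * (C x / (-L) ^ mx x)) sums ((-L) ^ mx x * (\<integral>s. s ^ mx x * exp (- L * s) \<partial>\<mu>) * (C x / (-L) ^ mx x))"
      by (rule sums_mult2[OF Ts])
    have e2: "(-L) ^ mx x * (\<integral>s. s ^ mx x * exp (- L * s) \<partial>\<mu>) * (C x / (-L) ^ mx x) = C x * (\<integral>s. s ^ mx x * exp (- L * s) \<partial>\<mu>)"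
    proof -
      have gen: "\<And>I X c. X \<noteq> 0 \<Longrightarrow> X * I * (c / X) = c * (I::real)" by (simp add: field_simps)
      show ?thesis by (rule gen[OF nz])
    qed
    have e3: "C x / (-L) ^ mx x = (\<Prod>i=1..q. \<Prod>j=1..k i. (- lam i j / L) ^ x i j / fact (x i j))"
      unfolding C_def mx_def by (rule coef_alt) (use Lpos in simp)
    have "(\<lambda>r. T r * (\<Prod>i=1..q. \<Prod>j=1..k i. (- lam i j / L) ^ x i j / fact (x i j))) sums (C x * (\<integral>s. s ^ mx x * exp (- L * s) \<partial>\<mu>))"
    proof -
      from s1 have "(\<lambda>r. T r * (C x / (-L) ^ mx x)) sums (C x * (\<integral>s. s ^ mx x * exp (- L * s) \<partial>\<mu>))"
        by (simp only: e2)
      then show ?thesis by (simp only: e3)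
    qed
    then show "C x * (\<integral>s. s ^ mx x * exp (- L * s) \<partial>\<mu>) = (\<Sum>r. T r * (\<Prod>i=1..q. \<Prod>j=1..k i. (- lam i j / L) ^ x i j / fact (x i j)))"
      by (rule sums_unique)
  qed
  finally show ?thesis unfolding L_def mx_def .
qed

end
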